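(* Let $q$ be a power of the prime $p$, $n\ge 2$ and $1\le i\le n$. Suppose that $p$ does not divide both of $\binom{n}{i}$ and $\binom{n-1}{i-1}$ (i.e. $p\nmid\binom{n}{i}$ or $p\nmid\binom{n-1}{i-1}$). Then $s_{n,i}(t)$ has no nonzero root (in an algebraic closure of $\mathbb{F}_q$) of multiplicity $m>1$ with $\gcd(m,p)=\gcd(m-1,p)=1$.
   Context: For a prime power $q$ and integers $n\ge 1$, $0\le i\le n$, the $i$-th $(n,q)$-elementary symmetric polynomial is $s_{n,i}(t)=\sum_{0\le j_1<j_2<\dots<j_i\le n-1} t^{q^{j_1}+q^{j_2}+\dots+q^{j_i}}\in\mathbb{F}_p[t]$ (where $p$ is the characteristic of $\mathbb{F}_q$). By convention $s_{n,0}(t)=1$. *)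

theory Defs
  imports "HOL-Computational_Algebra.Computational_Algebra"
begin

text \<open>The (n,q)-elementary symmetric polynomial s_{n,i}(t), with coefficients
  in an arbitrary commutative ring (for a field of characteristic p this is the
  image of the polynomial over F_p):
  sum over all i-element subsets J of {0..<n} of t^(sum_{j in J} q^j).\<close>
definition qsym :: "nat \<Rightarrow> nat \<Rightarrow> nat \<Rightarrow> 'a::comm_ring_1 poly" where
  "qsym q n i = (\<Sum>J\<in>{J. J \<subseteq> {0..<n} \<and> card J = i}. monom 1 (\<Sum>j\<in>J. q ^ j))"

end

theory Submission
  imports Defs
begin

lemma pderiv_sum_gen: "pderiv (\<Sum>x\<in>A. f x) = (\<Sum>x\<in>A. pderiv (f x))"
  by (induct A rule: infinite_finite_induct) (simp_all add: pderiv_add)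

lemma geom_bound:
  fixes q :: nat assumes "q \<ge> 2"
  shows "(\<Sum>j<n. q ^ j) < q ^ n"
proof (induction n)
  case 0 then show ?case by simp
next
  case (Suc n)
  have "(\<Sum>j<Suc n. q ^ j) = (\<Sum>j<n. q ^ j) + q ^ n" by simp
  also have "\<dots> < 2 * q ^ n" using Suc by simp
  also have "\<dots> \<le> q * q ^ n" using assms by simp
  finally show ?case by simp
qed

lemma subset_bound:
  fixes q :: nat assumes "q \<ge> 2" "J \<subseteq> {0..<n}"
  shows "(\<Sum>j\<in>J. q ^ j) < q ^ n"
proof -
  have "(\<Sum>j\<in>J. q ^ j) \<le> (\<Sum>j<n. q ^ j)"
    using assms by (intro sum_mono2) auto
  then show ?thesis using geom_bound[OF assms(1), of n] by simp
qed

lemma subset_inj: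
  fixes q :: nat assumes "q \<ge> 2"
  shows "J \<subseteq> {0..<n} \<Longrightarrow> J' \<subseteq> {0..<n} \<Longrightarrow> (\<Sum>j\<in>J. q ^ j) = (\<Sum>j\<in>J'. q ^ j) \<Longrightarrow> J = J'"
proof (induction n arbitrary: J J')
  case 0 then show ?case by auto
next
  case (Suc n)
  have fJ: "finite J" "finite J'" using Suc.prems finite_subset by auto
  let ?A = "J - {n}" and ?B = "J' - {n}"
  have A: "?A \<subseteq> {0..<n}" "?B \<subseteq> {0..<n}" using Suc.prems by auto
  have rem: "(\<Sum>j\<in>K. q ^ j) = (if n \<in> K then q ^ n else 0) + (\<Sum>j\<in>K - {n}. q ^ j)"
    if "finite K" for K
  proof (cases "n \<in> K")
    case True
    show ?thesis using sum.remove[OF that True, of "\<lambda>j. q ^ j"] True by (simp only: if_True)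
  next
    case False
    then have "K - {n} = K" by blast
    then show ?thesis using False by (simp only: if_False add_0)
  qed
  have sA: "(\<Sum>j\<in>J. q ^ j) = (if n \<in> J then q ^ n else 0) + (\<Sum>j\<in>?A. q ^ j)"
    using rem fJ by blast
  have sB: "(\<Sum>j\<in>J'. q ^ j) = (if n \<in> J' then q ^ n else 0) + (\<Sum>j\<in>?B. q ^ j)"
    using rem fJ by blast
  have bA: "(\<Sum>j\<in>?A. q ^ j) < q ^ n" and bB: "(\<Sum>j\<in>?B. q ^ j) < q ^ n"
    using subset_bound[OF assms] A by auto
  have eq: "n \<in> J \<longleftrightarrow> n \<in> J'"
  proof (rule ccontr)
    assume "\<not> (n \<in> J \<longleftrightarrow> n \<in> J')"
    then consider "n \<in> J" "n \<notin> J'" | "n \<notin> J" "n \<in> J'" by blast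
    then show False
    proof cases
      case 1
      then have "(\<Sum>j\<in>J. q ^ j) \<ge> q ^ n" "(\<Sum>j\<in>J'. q ^ j) < q ^ n"
        using sA sB bB by simp_all
      then show False using Suc.prems(3) by simp
    next
      case 2
      then have "(\<Sum>j\<in>J'. q ^ j) \<ge> q ^ n" "(\<Sum>j\<in>J. q ^ j) < q ^ n"
        using sA sB bA by simp_all
      then show False using Suc.prems(3) by simp
    qed
  qed
  then have ifeq: "(if n \<in> J then q ^ n else 0) = (if n \<in> J' then q ^ n else (0::nat))"
    by simp
  have "(\<Sum>j\<in>?A. q ^ j) = (\<Sum>j\<in>?B. q ^ j)" using sA sB Suc.prems(3) ifeq
    by linarith
  then have AB: "?A = ?B" by (rule Suc.IH[OF A])
  show ?case
  proof (rule set_eqI)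
    fix x show "x \<in> J \<longleftrightarrow> x \<in> J'"
      using AB eq by (cases "x = n") auto
  qed
qed

lemma qsym_nonzero:
  assumes "q \<ge> 2" "i \<le> n"
  shows "(qsym q n i :: 'a::comm_ring_1 poly) \<noteq> 0"
proof -
  let ?S = "{J. J \<subseteq> {0..<n} \<and> card J = i}"
  let ?E = "\<Sum>j\<in>{0..<i}. q ^ j"
  have sub: "?S \<subseteq> Pow {0..<n}" by blast
  have fin: "finite ?S" using finite_subset[OF sub] by simp
  have "coeff (qsym q n i :: 'a poly) ?E = (\<Sum>J\<in>?S. if (\<Sum>j\<in>J. q ^ j) = ?E then 1 else 0)"
    unfolding qsym_def coeff_sum coeff_monom by (rule refl)
  also have "\<dots> = (\<Sum>J\<in>{{0..<i}}. (1::'a))"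
  proof (rule sum.mono_neutral_cong_right[OF fin])
    show "{{0..<i}} \<subseteq> ?S" using assms by auto
    show "\<forall>J\<in>?S - {{0..<i}}. (if (\<Sum>j\<in>J. q ^ j) = ?E then 1 else 0) = (0::'a)"
    proof
      fix J assume J: "J \<in> ?S - {{0..<i}}"
      have "(\<Sum>j\<in>J. q ^ j) \<noteq> ?E"
      proof
        assume eqE: "(\<Sum>j\<in>J. q ^ j) = ?E"
        have JJ: "J \<subseteq> {0..<n}" using J by blast
        have II: "{0..<i} \<subseteq> {0..<n}" using assms by auto
        have "J = {0..<i}" by (rule subset_inj[OF assms(1) JJ II eqE])
        then show False using J by blast
      qed
      then show "(if (\<Sum>j\<in>J. q ^ j) = ?E then 1 else 0) = (0::'a)" by simp
    qed
  qed simp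
  finally have "coeff (qsym q n i :: 'a poly) ?E = 1" by simp
  then show ?thesis by (metis coeff_0 one_neq_zero)
qed

lemma qsym_pderiv2:
  fixes p q k :: nat
  assumes "prime p" "k \<ge> 1" "q = p ^ k" "CHAR('a::field) = p"
  shows "pderiv (pderiv (qsym q n i :: 'a poly)) = 0"
proof -
  have key: "p dvd e * (e - 1)" if "J \<subseteq> {0..<n}" and "e = (\<Sum>j\<in>J. q ^ j)" for J e
  proof -
    have fJ: "finite J" using that finite_subset by auto
    have dv: "p dvd (\<Sum>j\<in>J - {0}. q ^ j)"
    proof (rule dvd_sum)
      fix j assume "j \<in> J - {0}"
      then have "j \<ge> 1" by auto
      then have "p dvd p ^ (k * j)" using assms(2)
      proof -
        have "k * j \<noteq> 0" using assms(2) \<open>j \<ge> 1\<close> by simp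
        then show ?thesis by (simp add: dvd_power)
      qed
      then show "p dvd q ^ j" by (simp add: assms(3) power_mult)
    qed
    show ?thesis
    proof (cases "0 \<in> J")
      case True
      then have "e = 1 + (\<Sum>j\<in>J - {0}. q ^ j)" using that fJ by (simp add: sum.remove)
      then show ?thesis using dv by simp
    next
      case False
      then have "e = (\<Sum>j\<in>J - {0}. q ^ j)" using that by simp
      then show ?thesis using dv by simp
    qed
  qed
  show ?thesis
    unfolding qsym_def pderiv_sum_gen pderiv_monom
  proof (rule sum.neutral, safe)
    fix J assume J: "J \<subseteq> {0..<n}" "i = card J"
    define e where "e = (\<Sum>j\<in>J. q ^ j)"
    have "p dvd e \<or> p dvd (e - 1)"
      using key[OF J(1) e_def] assms(1) prime_dvd_mult_iff by blast
    then have "of_nat e = (0::'a) \<or> of_nat (e - 1) = (0::'a)"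
      using assms(4) by (auto simp add: of_nat_eq_0_iff_char_dvd)
    then have "of_nat (e - 1) * (of_nat e * 1) = (0::'a)" by auto
    then show "monom (of_nat (e - 1) * (of_nat e * 1)) (e - 1 - 1) = (0::'a poly)" by simp
  qed
qed

lemma order_pderiv_charp:
  fixes f :: "'a::field poly"
  assumes "f \<noteq> 0" "order a f \<ge> 1" "\<not> CHAR('a) dvd order a f"
  shows "pderiv f \<noteq> 0 \<and> order a (pderiv f) = order a f - 1"
proof -
  define m where "m = order a f"
  obtain u where u: "f = [:-a,1:] ^ m * u" "\<not> [:-a,1:] dvd u"
    using order_decomp[OF assms(1)] m_def by blast
  have m1: "m = Suc (m - 1)" using assms(2) m_def by simp
  define w where "w = smult (of_nat m) u + [:-a,1:] * pderiv u"
  have "pderiv f = [:-a,1:] ^ (m - 1) * w"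
  proof -
    have "pderiv f = [:-a,1:] ^ m * pderiv u + u * pderiv ([:-a,1:] ^ m)"
      using u(1) pderiv_mult by simp
    also have "pderiv ([:-a,1:] ^ m) = smult (of_nat m) ([:-a,1:] ^ (m - 1))"
      by (simp add: pderiv_power pderiv_pCons)
    also have "[:-a,1:] ^ m = [:-a,1:] ^ (m - 1) * [:-a,1:]"
      by (subst m1) (simp add: mult.commute)
    finally show ?thesis unfolding w_def by (simp add: algebra_simps)
  qed
  moreover have nd: "\<not> [:-a,1:] dvd w"
  proof
    assume "[:-a,1:] dvd w"
    then have "[:-a,1:] dvd smult (of_nat m) u"
      unfolding w_def by (metis dvd_add_left_iff dvd_triv_left)
    moreover have "of_nat m \<noteq> (0::'a)"
      using assms(3) m_def by (simp add: of_nat_eq_0_iff_char_dvd)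
    ultimately have "[:-a,1:] dvd u"
      by (metis dvd_smult_cancel)
    then show False using u(2) by simp
  qed
  moreover have "w \<noteq> 0" using nd by auto
  ultimately have "pderiv f \<noteq> 0" and "order a (pderiv f) = m - 1"
  proof -
    show "pderiv f \<noteq> 0" using \<open>pderiv f = _\<close> \<open>w \<noteq> 0\<close> by simp
    show "order a (pderiv f) = m - 1"
    proof (rule order_unique_lemma)
      show "[:-a,1:] ^ (m - 1) dvd pderiv f" using \<open>pderiv f = _\<close> by simp
      show "\<not> [:-a,1:] ^ Suc (m - 1) dvd pderiv f"
      proof
        assume "[:-a,1:] ^ Suc (m - 1) dvd pderiv f"
        then have "[:-a,1:] ^ (m - 1) * [:-a,1:] dvd [:-a,1:] ^ (m - 1) * w"
          using \<open>pderiv f = _\<close> by (simp add: mult.commute)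
        then have "[:-a,1:] dvd w" by (subst (asm) dvd_mult_cancel_left) auto
        then show False using nd by simp
      qed
    qed
  qed
  then show ?thesis using m_def by simp
qed

theorem corollary3p11:
  fixes p q n i k :: nat
  assumes "prime p" and "k \<ge> 1" and "q = p ^ k"
    and "n \<ge> 2" and "1 \<le> i" and "i \<le> n"
    and "\<not> p dvd (n choose i) \<or> \<not> p dvd ((n - 1) choose (i - 1))"
    and "CHAR('a::field) = p"
    and "(a::'a) \<noteq> 0"
    and "m = order a (qsym q n i :: 'a poly)"
    and "m > 1"
  shows "\<not> (coprime m p \<and> coprime (m - 1) p)"
proof
  assume cop: "coprime m p \<and> coprime (m - 1) p"
  let ?f = "qsym q n i :: 'a poly"
  have p2: "p \<ge> 2" using assms(1) prime_ge_2_nat by blast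
  have "q \<ge> p" using assms(2,3) p2
    using power_increasing[of 1 k p] by simp
  then have q2: "q \<ge> 2" using p2 by simp
  have f0: "?f \<noteq> 0" using qsym_nonzero[OF q2 assms(6)] .
  have ndm: "\<not> p dvd m"
  proof
    assume "p dvd m"
    then have "is_unit p" using coprime_common_divisor[of m p p] cop by simp
    then show False using not_prime_unit assms(1) by blast
  qed
  have ndm1: "\<not> p dvd (m - 1)"
  proof
    assume "p dvd (m - 1)"
    then have "is_unit p" using coprime_common_divisor[of "m - 1" p p] cop by simp
    then show False using not_prime_unit assms(1) by blast
  qed
  have s1: "pderiv ?f \<noteq> 0 \<and> order a (pderiv ?f) = m - 1"
    using order_pderiv_charp[OF f0, of a] assms(8,10,11) ndm by simp
  have "pderiv (pderiv ?f) \<noteq> 0"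
    using order_pderiv_charp[of "pderiv ?f" a] s1 assms(8,11) ndm1 by simp
  then show False using qsym_pderiv2[OF assms(1,2,3,8)] by simp
qed

end
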